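(* Assume Condition (C) and $\lambda/2<h<\lambda$. If $\eta\in\mathcal M_{n^+_c}$ contains a full column (or a full row) of $\Lambda$ on which all spins are $0$, then $\eta$ is not a minimizer of $H$ on $\mathcal M_{n^+_c}$.
   Context: Let $\Lambda=\{1,\dots,L\}^2$, $\mathcal X=\{-1,0,+1\}^\Lambda$, $\partial^-\Lambda$ the sites of $\Lambda$ with a nearest neighbour outside $\Lambda$. Hamiltonian: $H(\eta)=\frac J2\sum_{i,j\in\Lambda,|i-j|=1}[\eta(i)-\eta(j)]^2+J\sum_{i\in\partial^-\Lambda}\sum_{j\notin\Lambda,|i-j|=1}\eta(i)^2-\lambda\sum_{i}\eta(i)^2-h\sum_i\eta(i)$. Condition (C): $J$ sufficiently large compared to $\lambda,h>0$; $L>(2J/(\lambda-h))^3$; none of $\tfrac{2J}{\lambda+h},\tfrac{2J}{\lambda-h},\tfrac{2J+\lambda-h}{\lambda+h},\tfrac{J+\lambda+h}{h}$ is an integer. Let $l_c=\lfloor\frac{2J+\lambda-h}{2h}\rfloor+1$ and $n^+_c=l_c(l_c-1)$. For $n\ge0$, $\mathcal M_n$ is the set of configurations with exactly $n$ sites of spin $+1$. *)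

theory Defs
  imports Complex_Main
begin

type_synonym site = "int \<times> int"
type_synonym config = "site \<Rightarrow> int"

definition Lam :: "nat \<Rightarrow> site set" where
  "Lam L = {1..int L} \<times> {1..int L}"

definition nbrs :: "site \<Rightarrow> site set" where
  "nbrs i = {(fst i + 1, snd i), (fst i - 1, snd i), (fst i, snd i + 1), (fst i, snd i - 1)}"

definition inner_boundary :: "nat \<Rightarrow> site set" where
  "inner_boundary L = {i \<in> Lam L. \<exists>j \<in> nbrs i. j \<notin> Lam L}"

text \<open>Configurations: spins in {-1,0,1} on Lambda; fixed to 0 outside Lambda
  (so that each configuration has a unique representative).\<close>
definition configs :: "nat \<Rightarrow> config set" where
  "configs L = {\<eta>. (\<forall>i \<in> Lam L. \<eta> i \<in> {-1, 0, 1}) \<and> (\<forall>i. i \<notin> Lam L \<longrightarrow> \<eta> i = 0)}"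

definition H :: "real \<Rightarrow> real \<Rightarrow> real \<Rightarrow> nat \<Rightarrow> config \<Rightarrow> real" where
  "H J lam h L \<eta> =
     J / 2 * (\<Sum>i\<in>Lam L. \<Sum>j\<in>nbrs i \<inter> Lam L. (real_of_int (\<eta> i - \<eta> j))^2)
   + J * (\<Sum>i\<in>inner_boundary L. \<Sum>j\<in>nbrs i - Lam L. (real_of_int (\<eta> i))^2)
   - lam * (\<Sum>i\<in>Lam L. (real_of_int (\<eta> i))^2)
   - h * (\<Sum>i\<in>Lam L. real_of_int (\<eta> i))"

definition M :: "nat \<Rightarrow> nat \<Rightarrow> config set" where
  "M L n = {\<eta> \<in> configs L. card {i \<in> Lam L. \<eta> i = 1} = n}"

definition is_minimizer_on :: "real \<Rightarrow> real \<Rightarrow> real \<Rightarrow> nat \<Rightarrow> config set \<Rightarrow> config \<Rightarrow> bool" where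
  "is_minimizer_on J lam h L S \<eta> \<longleftrightarrow> \<eta> \<in> S \<and> (\<forall>\<xi> \<in> S. H J lam h L \<eta> \<le> H J lam h L \<xi>)"

definition l_c :: "real \<Rightarrow> real \<Rightarrow> real \<Rightarrow> int" where
  "l_c J lam h = \<lfloor>(2 * J + lam - h) / (2 * h)\<rfloor> + 1"

definition n_c_plus :: "real \<Rightarrow> real \<Rightarrow> real \<Rightarrow> nat" where
  "n_c_plus J lam h = nat (l_c J lam h * (l_c J lam h - 1))"

text \<open>Condition (C) apart from "J sufficiently large", which is expressed
  in the theorem by an existential threshold J0 depending on lambda and h.\<close>
definition cond_C_rest :: "real \<Rightarrow> real \<Rightarrow> real \<Rightarrow> nat \<Rightarrow> bool" where
  "cond_C_rest J lam h L \<longleftrightarrow>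
     real L > (2 * J / (lam - h)) ^ 3 \<and>
     2 * J / (lam + h) \<notin> \<int> \<and> 2 * J / (lam - h) \<notin> \<int> \<and>
     (2 * J + lam - h) / (lam + h) \<notin> \<int> \<and> (J + lam + h) / h \<notin> \<int>"

definition has_zero_column_or_row :: "nat \<Rightarrow> config \<Rightarrow> bool" where
  "has_zero_column_or_row L \<eta> \<longleftrightarrow>
     (\<exists>c \<in> {1..int L}. \<forall>r \<in> {1..int L}. \<eta> (c, r) = 0) \<or>
     (\<exists>r \<in> {1..int L}. \<forall>c \<in> {1..int L}. \<eta> (c, r) = 0)"

end

theory Submission
  imports Defs
begin
lemma oneD:
  fixes g :: "int \<Rightarrow> real" and L :: int
  assumes "L \<ge> 1"
  shows "(\<Sum>x\<in>{1..L}. (if x+1 \<in> {1..L} then 1 else 2) * g x + (if x-1 \<in> {1..L} then 1 else 2) * g (x-1))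
         = 2 * (\<Sum>x\<in>{0..L}. g x)"
proof -
  have A: "(\<Sum>x\<in>{1..L}. (if x+1 \<in> {1..L} then 1 else 2) * g x) = (\<Sum>x\<in>{1..L-1}. g x) + 2 * g L"
  proof -
    have "{1..L} = insert L {1..L-1}" using assms by auto
    hence "(\<Sum>x\<in>{1..L}. (if x+1 \<in> {1..L} then 1 else 2) * g x) = 2 * g L + (\<Sum>x\<in>{1..L-1}. (if x+1 \<in> {1..L} then 1 else 2) * g x)"
      by simp
    also have "(\<Sum>x\<in>{1..L-1}. (if x+1 \<in> {1..L} then 1 else 2) * g x) = (\<Sum>x\<in>{1..L-1}. g x)"
      by (rule sum.cong) auto
    finally show ?thesis by simp
  qed
  have B: "(\<Sum>x\<in>{1..L}. (if x-1 \<in> {1..L} then 1 else 2) * g (x-1)) = (\<Sum>x\<in>{1..L-1}. g x) + 2 * g 0"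
  proof -
    have "{1..L} = insert 1 {2..L}" using assms by auto
    hence "(\<Sum>x\<in>{1..L}. (if x-1 \<in> {1..L} then 1 else 2) * g (x-1)) = 2 * g 0 + (\<Sum>x\<in>{2..L}. (if x-1 \<in> {1..L} then 1 else 2) * g (x-1))"
      by simp
    also have "(\<Sum>x\<in>{2..L}. (if x-1 \<in> {1..L} then 1 else 2) * g (x-1)) = (\<Sum>x\<in>{2..L}. g (x-1))"
      by (rule sum.cong) auto
    also have "\<dots> = (\<Sum>x\<in>{1..L-1}. g x)"
      by (rule sum.reindex_bij_witness[of _ "\<lambda>x. x+1" "\<lambda>x. x-1"]) auto
    finally show ?thesis by simp
  qed
  have C: "(\<Sum>x\<in>{0..L}. g x) = g 0 + g L + (\<Sum>x\<in>{1..L-1}. g x)"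
  proof -
    have "{0..L} = insert 0 (insert L {1..L-1})" using assms by auto
    thus ?thesis using assms by simp
  qed
  show ?thesis unfolding sum.distrib A B C by simp
qed

definition hrow :: "nat \<Rightarrow> config \<Rightarrow> int \<Rightarrow> real" where
  "hrow L \<eta> y = (\<Sum>x\<in>{0..int L}. (real_of_int (\<eta> (x+1,y) - \<eta> (x,y)))^2)"
definition vcol :: "nat \<Rightarrow> config \<Rightarrow> int \<Rightarrow> real" where
  "vcol L \<eta> x = (\<Sum>y\<in>{0..int L}. (real_of_int (\<eta> (x,y+1) - \<eta> (x,y)))^2)"
definition EE :: "nat \<Rightarrow> config \<Rightarrow> real" where
  "EE L \<eta> = (\<Sum>y\<in>{1..int L}. hrow L \<eta> y) + (\<Sum>x\<in>{1..int L}. vcol L \<eta> x)"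

lemma sum_nbrs: fixes G :: "site \<Rightarrow> real" shows "(\<Sum>j\<in>nbrs (x,y). G j) = G (x+1,y) + G (x-1,y) + G (x,y+1) + G (x,y-1)"
  by (simp add: nbrs_def add.assoc)

lemma edge_eq:
  assumes "\<eta> \<in> configs L"
  shows "(\<Sum>i\<in>Lam L. \<Sum>j\<in>nbrs i \<inter> Lam L. (real_of_int (\<eta> i - \<eta> j))^2)
       + 2 * (\<Sum>i\<in>inner_boundary L. \<Sum>j\<in>nbrs i - Lam L. (real_of_int (\<eta> i))^2) = 2 * EE L \<eta>"
proof (cases "L = 0")
  case True
  then show ?thesis by (simp add: Lam_def inner_boundary_def EE_def)
next
  case False
  hence L1: "int L \<ge> 1" by simp
  define D where "D i j = (real_of_int (\<eta> i - \<eta> j))^2" for i j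
  define w where "w j = (if j \<in> Lam L then 1 else (2::real))" for j
  have out: "\<eta> j = 0" if "j \<notin> Lam L" for j using assms that by (cases j) (auto simp: configs_def)
  have fin: "finite (Lam L)" by (simp add: Lam_def)
  have a: "(\<Sum>i\<in>inner_boundary L. \<Sum>j\<in>nbrs i - Lam L. (real_of_int (\<eta> i))^2)
        = (\<Sum>i\<in>Lam L. \<Sum>j\<in>nbrs i - Lam L. D i j)"
  proof -
    have "(\<Sum>i\<in>inner_boundary L. \<Sum>j\<in>nbrs i - Lam L. (real_of_int (\<eta> i))^2)
        = (\<Sum>i\<in>Lam L. \<Sum>j\<in>nbrs i - Lam L. (real_of_int (\<eta> i))^2)"
    proof (rule sum.mono_neutral_left[OF fin])
      show "inner_boundary L \<subseteq> Lam L" by (auto simp: inner_boundary_def)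
      have "\<forall>i\<in>Lam L - inner_boundary L. nbrs i - Lam L = {}" by (auto simp: inner_boundary_def)
      thus "\<forall>i\<in>Lam L - inner_boundary L. (\<Sum>j\<in>nbrs i - Lam L. (real_of_int (\<eta> i))\<^sup>2) = 0" by (metis sum.empty)
    qed
    also have "\<dots> = (\<Sum>i\<in>Lam L. \<Sum>j\<in>nbrs i - Lam L. D i j)"
      by (intro sum.cong refl) (simp add: D_def out)
    finally show ?thesis .
  qed
  have b: "(\<Sum>i\<in>Lam L. \<Sum>j\<in>nbrs i \<inter> Lam L. D i j) + 2 * (\<Sum>i\<in>Lam L. \<Sum>j\<in>nbrs i - Lam L. D i j)
        = (\<Sum>i\<in>Lam L. \<Sum>j\<in>nbrs i. w j * D i j)"
  proof -
    have "(\<Sum>j\<in>nbrs i. w j * D i j) = (\<Sum>j\<in>nbrs i \<inter> Lam L. D i j) + 2 * (\<Sum>j\<in>nbrs i - Lam L. D i j)" for i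
    proof -
      have fn: "finite (nbrs i)" by (simp add: nbrs_def)
      have "(\<Sum>j\<in>nbrs i. w j * D i j) = (\<Sum>j\<in>nbrs i \<inter> Lam L. w j * D i j) + (\<Sum>j\<in>nbrs i - Lam L. w j * D i j)"
        by (rule sum.Int_Diff[OF fn])
      also have "(\<Sum>j\<in>nbrs i \<inter> Lam L. w j * D i j) = (\<Sum>j\<in>nbrs i \<inter> Lam L. D i j)"
        by (rule sum.cong) (auto simp: w_def)
      also have "(\<Sum>j\<in>nbrs i - Lam L. w j * D i j) = 2 * (\<Sum>j\<in>nbrs i - Lam L. D i j)"
        by (simp add: sum_distrib_left w_def)
      finally show ?thesis .
    qed
    thus ?thesis by (simp add: sum.distrib sum_distrib_left)
  qed
  define hz where "hz x y = w (x+1,y) * D (x,y) (x+1,y) + w (x-1,y) * D (x,y) (x-1,y)" for x y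
  define vz where "vz x y = w (x,y+1) * D (x,y) (x,y+1) + w (x,y-1) * D (x,y) (x,y-1)" for x y
  have c: "(\<Sum>i\<in>Lam L. \<Sum>j\<in>nbrs i. w j * D i j) = (\<Sum>x\<in>{1..int L}. \<Sum>y\<in>{1..int L}. hz x y)
          + (\<Sum>x\<in>{1..int L}. \<Sum>y\<in>{1..int L}. vz x y)"
  proof -
    have "(\<Sum>i\<in>Lam L. \<Sum>j\<in>nbrs i. w j * D i j) = (\<Sum>(x,y)\<in>{1..int L}\<times>{1..int L}. hz x y + vz x y)"
      unfolding Lam_def by (intro sum.cong refl) (auto simp: sum_nbrs hz_def vz_def)
    also have "\<dots> = (\<Sum>x\<in>{1..int L}. \<Sum>y\<in>{1..int L}. hz x y + vz x y)"
      by (rule sum.cartesian_product[symmetric])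
    finally show ?thesis by (simp add: sum.distrib)
  qed
  have h: "(\<Sum>x\<in>{1..int L}. \<Sum>y\<in>{1..int L}. hz x y) = 2 * (\<Sum>y\<in>{1..int L}. hrow L \<eta> y)"
  proof -
    have "(\<Sum>x\<in>{1..int L}. \<Sum>y\<in>{1..int L}. hz x y) = (\<Sum>y\<in>{1..int L}. \<Sum>x\<in>{1..int L}. hz x y)"
      by (rule sum.swap)
    also have "\<dots> = (\<Sum>y\<in>{1..int L}. 2 * hrow L \<eta> y)"
    proof (rule sum.cong[OF refl])
      fix y assume y: "y \<in> {1..int L}"
      have "(\<Sum>x\<in>{1..int L}. hz x y) = (\<Sum>x\<in>{1..int L}. (if x+1 \<in> {1..int L} then 1 else 2) * D (x,y) (x+1,y)
           + (if x-1 \<in> {1..int L} then 1 else 2) * D (x-1,y) (x-1+1,y))"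
        using y by (intro sum.cong refl) (auto simp: hz_def w_def Lam_def D_def power2_commute)
      also have "\<dots> = 2 * (\<Sum>x\<in>{0..int L}. D (x,y) (x+1,y))"
        by (rule oneD[OF L1, where g = "\<lambda>x. D (x,y) (x+1,y)"])
      finally show "(\<Sum>x\<in>{1..int L}. hz x y) = 2 * hrow L \<eta> y"
        by (simp add: hrow_def D_def power2_commute)
    qed
    finally show ?thesis by (simp add: sum_distrib_left)
  qed
  have v: "(\<Sum>x\<in>{1..int L}. \<Sum>y\<in>{1..int L}. vz x y) = 2 * (\<Sum>x\<in>{1..int L}. vcol L \<eta> x)"
  proof -
    have "(\<Sum>x\<in>{1..int L}. \<Sum>y\<in>{1..int L}. vz x y) = (\<Sum>x\<in>{1..int L}. 2 * vcol L \<eta> x)"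
    proof (rule sum.cong[OF refl])
      fix x assume x: "x \<in> {1..int L}"
      have "(\<Sum>y\<in>{1..int L}. vz x y) = (\<Sum>y\<in>{1..int L}. (if y+1 \<in> {1..int L} then 1 else 2) * D (x,y) (x,y+1)
           + (if y-1 \<in> {1..int L} then 1 else 2) * D (x,y-1) (x,y-1+1))"
        using x by (intro sum.cong refl) (auto simp: vz_def w_def Lam_def D_def power2_commute)
      also have "\<dots> = 2 * (\<Sum>y\<in>{0..int L}. D (x,y) (x,y+1))"
        by (rule oneD[OF L1, where g = "\<lambda>y. D (x,y) (x,y+1)"])
      finally show "(\<Sum>y\<in>{1..int L}. vz x y) = 2 * vcol L \<eta> x"
        by (simp add: vcol_def D_def power2_commute)
    qed
    thus ?thesis by (simp add: sum_distrib_left)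
  qed
  show ?thesis using a b c h v unfolding EE_def D_def by simp
qed

lemma H_eq:
  assumes "\<eta> \<in> configs L"
  shows "H J lam h L \<eta> = J * EE L \<eta> - lam * (\<Sum>i\<in>Lam L. (real_of_int (\<eta> i))^2)
                                       - h * (\<Sum>i\<in>Lam L. real_of_int (\<eta> i))"
proof -
  define S1 where "S1 = (\<Sum>i\<in>Lam L. \<Sum>j\<in>nbrs i \<inter> Lam L. (real_of_int (\<eta> i - \<eta> j))^2)"
  define S2 where "S2 = (\<Sum>i\<in>inner_boundary L. \<Sum>j\<in>nbrs i - Lam L. (real_of_int (\<eta> i))^2)"
  have e: "S1 + 2 * S2 = 2 * EE L \<eta>" unfolding S1_def S2_def by (rule edge_eq[OF assms])
  have "J / 2 * S1 + J * S2 = J * EE L \<eta>"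
  proof -
    have "J / 2 * S1 + J * S2 = J / 2 * (S1 + 2 * S2)" by (simp add: algebra_simps)
    thus ?thesis using e by simp
  qed
  thus ?thesis unfolding H_def S1_def S2_def by linarith
qed


lemma bulk:
  assumes "\<eta> \<in> configs L"
  shows "lam * (\<Sum>i\<in>Lam L. (real_of_int (\<eta> i))^2) + h * (\<Sum>i\<in>Lam L. real_of_int (\<eta> i))
       = (lam - h) * card {i\<in>Lam L. \<eta> i \<noteq> 0} + 2 * h * card {i\<in>Lam L. \<eta> i = 1}"
proof -
  have fin: "finite (Lam L)" by (simp add: Lam_def)
  have "lam * (\<Sum>i\<in>Lam L. (real_of_int (\<eta> i))^2) + h * (\<Sum>i\<in>Lam L. real_of_int (\<eta> i))
      = (\<Sum>i\<in>Lam L. lam * (real_of_int (\<eta> i))^2 + h * real_of_int (\<eta> i))"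
    by (simp add: sum.distrib sum_distrib_left)
  also have "\<dots> = (\<Sum>i\<in>Lam L. (lam - h) * of_bool (\<eta> i \<noteq> 0) + 2 * h * of_bool (\<eta> i = 1))"
  proof (rule sum.cong[OF refl])
    fix i assume "i \<in> Lam L"
    hence "\<eta> i \<in> {-1,0,1}" using assms by (simp add: configs_def)
    thus "lam * (real_of_int (\<eta> i))^2 + h * real_of_int (\<eta> i) = (lam - h) * of_bool (\<eta> i \<noteq> 0) + 2 * h * of_bool (\<eta> i = 1)"
      by auto
  qed
  also have "\<dots> = (lam - h) * card (Lam L \<inter> {i. \<eta> i \<noteq> 0}) + 2 * h * card (Lam L \<inter> {i. \<eta> i = 1})"
    by (simp add: sum.distrib flip: sum_distrib_left add: fin)
  also have "Lam L \<inter> {i. \<eta> i \<noteq> 0} = {i\<in>Lam L. \<eta> i \<noteq> 0}" by blast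
  also have "Lam L \<inter> {i. \<eta> i = 1} = {i\<in>Lam L. \<eta> i = 1}" by blast
  finally show ?thesis .
qed

lemma sq1: fixes z :: int assumes "z \<noteq> 0" shows "(real_of_int z)^2 \<ge> 1"
  by (smt (verit) assms of_int_1_le_iff of_int_power power2_less_eq_zero_iff)

lemma seg1:
  fixes f :: "int \<Rightarrow> int"
  assumes "a \<le> x"
  shows "f a \<noteq> f x \<Longrightarrow> (\<Sum>k\<in>{a..x-1}. (real_of_int (f (k+1) - f k))^2) \<ge> 1"
  using assms(1)
proof (induction x rule: int_ge_induct)
  case base
  then show ?case by simp
next
  case (step i)
  have eq: "{a..i+1-1} = insert i {a..i-1}" using step.hyps by auto
  have nn: "(\<Sum>k\<in>{a..i-1}. (real_of_int (f (k+1) - f k))^2) \<ge> 0" by (intro sum_nonneg) auto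
  show ?case
  proof (cases "f a = f i")
    case True
    hence "f (i+1) - f i \<noteq> 0" using step.prems by auto
    hence "(real_of_int (f (i+1) - f i))^2 \<ge> 1" by (rule sq1)
    thus ?thesis unfolding eq using nn by simp
  next
    case False
    hence "(\<Sum>k\<in>{a..i-1}. (real_of_int (f (k+1) - f k))^2) \<ge> 1" by (rule step.IH)
    thus ?thesis unfolding eq by (simp add: add_increasing)
  qed
qed

lemma seg2:
  fixes f :: "int \<Rightarrow> int"
  assumes "f a = 0" "f b = 0" "f x \<noteq> 0" "a \<le> x" "x \<le> b"
  shows "(\<Sum>k\<in>{a..b-1}. (real_of_int (f (k+1) - f k))^2) \<ge> 2"
proof -
  have ax: "a < x" "x < b" using assms by (auto simp: le_less)
  have u: "{a..b-1} = {a..x-1} \<union> {x..b-1}" using ax by auto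
  have "(\<Sum>k\<in>{a..b-1}. (real_of_int (f (k+1) - f k))^2)
      = (\<Sum>k\<in>{a..x-1}. (real_of_int (f (k+1) - f k))^2) + (\<Sum>k\<in>{x..b-1}. (real_of_int (f (k+1) - f k))^2)"
    unfolding u by (rule sum.union_disjoint) auto
  moreover have "(\<Sum>k\<in>{a..x-1}. (real_of_int (f (k+1) - f k))^2) \<ge> 1"
    using seg1[of a x f] assms by auto
  moreover have "(\<Sum>k\<in>{x..b-1}. (real_of_int (f (k+1) - f k))^2) \<ge> 1"
    using seg1[of x b f] assms by auto
  ultimately show ?thesis by simp
qed

lemma seg_nonneg: "(\<Sum>k\<in>A. (real_of_int (f (k+1) - f k))^2) \<ge> 0"
  by (intro sum_nonneg) auto

lemma row_lb:
  assumes "\<eta> \<in> configs L" "c \<in> {1..int L}" "\<forall>y\<in>{1..int L}. \<eta> (c,y) = 0" "y \<in> {1..int L}"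
  shows "hrow L \<eta> y \<ge> 2 * of_bool (\<exists>x\<in>{1..c-1}. \<eta> (x,y) \<noteq> 0) + 2 * of_bool (\<exists>x\<in>{c+1..int L}. \<eta> (x,y) \<noteq> 0)"
proof -
  define f where "f x = \<eta> (x,y)" for x
  have out: "\<eta> j = 0" if "j \<notin> Lam L" for j using assms(1) that by (cases j) (auto simp: configs_def)
  have f0: "f 0 = 0" "f (int L + 1) = 0" using out by (auto simp: f_def Lam_def)
  have fc: "f c = 0" using assms by (simp add: f_def)
  have u: "{0..int L} = {0..c-1} \<union> {c..int L+1-1}" using assms(2) by auto
  have "hrow L \<eta> y = (\<Sum>k\<in>{0..c-1}. (real_of_int (f (k+1) - f k))^2) + (\<Sum>k\<in>{c..int L+1-1}. (real_of_int (f (k+1) - f k))^2)"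
    unfolding hrow_def f_def[symmetric] u by (rule sum.union_disjoint) auto
  moreover have "(\<Sum>k\<in>{0..c-1}. (real_of_int (f (k+1) - f k))^2) \<ge> 2 * of_bool (\<exists>x\<in>{1..c-1}. \<eta> (x,y) \<noteq> 0)"
  proof (cases "\<exists>x\<in>{1..c-1}. \<eta> (x,y) \<noteq> 0")
    case True
    then obtain x where "x \<in> {1..c-1}" "f x \<noteq> 0" by (auto simp: f_def)
    thus ?thesis using seg2[of f 0 c x] f0 fc by auto
  qed (auto intro!: sum_nonneg)
  moreover have "(\<Sum>k\<in>{c..int L+1-1}. (real_of_int (f (k+1) - f k))^2) \<ge> 2 * of_bool (\<exists>x\<in>{c+1..int L}. \<eta> (x,y) \<noteq> 0)"
  proof (cases "\<exists>x\<in>{c+1..int L}. \<eta> (x,y) \<noteq> 0")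
    case True
    then obtain x where "x \<in> {c+1..int L}" "f x \<noteq> 0" by (auto simp: f_def)
    thus ?thesis using seg2[of f c "int L + 1" x] f0 fc by auto
  qed (auto intro!: sum_nonneg)
  ultimately show ?thesis by simp
qed

lemma col_lb:
  assumes "\<eta> \<in> configs L" "x \<in> {1..int L}"
  shows "vcol L \<eta> x \<ge> 2 * of_bool (\<exists>y\<in>{1..int L}. \<eta> (x,y) \<noteq> 0)"
proof (cases "\<exists>y\<in>{1..int L}. \<eta> (x,y) \<noteq> 0")
  case True
  define f where "f y = \<eta> (x,y)" for y
  have out: "\<eta> j = 0" if "j \<notin> Lam L" for j using assms(1) that by (cases j) (auto simp: configs_def)
  have f0: "f 0 = 0" "f (int L + 1) = 0" using out by (auto simp: f_def Lam_def)
  obtain y where "y \<in> {1..int L}" "f y \<noteq> 0" using True by (auto simp: f_def)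
  hence "(\<Sum>k\<in>{0..int L+1-1}. (real_of_int (f (k+1) - f k))^2) \<ge> 2" using seg2[of f 0 "int L + 1" y] f0 by auto
  thus ?thesis using True by (simp add: vcol_def f_def)
next
  case False
  thus ?thesis by (auto simp: vcol_def intro!: sum_nonneg)
qed


lemma phi:
  fixes J d a r L :: real
  assumes "0 < L" "0 \<le> r" "r \<le> L" "0 \<le> a" "0 \<le> J"
  shows "2*J*(a+r) - d*a*r \<ge> min 0 (2*J*(a+L) - d*a*L)"
proof -
  define \<psi> where "\<psi> = 2*J*(a+L) - d*a*L"
  have id: "L * (2*J*(a+r) - d*a*r) = (L - r) * (2*J*a) + r * \<psi>"
    unfolding \<psi>_def by (simp add: algebra_simps)
  have p1: "(L - r) * (2*J*a) \<ge> 0" using assms by simp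
  show ?thesis
  proof (cases "\<psi> \<ge> 0")
    case True
    hence "r * \<psi> \<ge> 0" using assms by simp
    hence "L * (2*J*(a+r) - d*a*r) \<ge> 0" using id p1 by linarith
    hence "2*J*(a+r) - d*a*r \<ge> 0" using assms(1) by (simp add: zero_le_mult_iff)
    thus ?thesis by simp
  next
    case False
    have "r * \<psi> \<ge> L * \<psi>" using False assms(3) by (intro mult_right_mono_neg) auto
    hence "L * (2*J*(a+r) - d*a*r) \<ge> L * \<psi>" using id p1 by linarith
    hence "2*J*(a+r) - d*a*r \<ge> \<psi>" using assms(1) by simp
    thus ?thesis unfolding \<psi>_def by simp
  qed
qed

lemma arith_lb:
  fixes J d aL aR rL rR L :: real
  assumes "0 \<le> J" "0 \<le> aL" "0 \<le> aR" "0 \<le> rL" "0 \<le> rR" "rL \<le> L" "rR \<le> L"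
    "aL + aR \<le> L - 1" "0 < L" "d * L \<ge> 2*J" "2*J*(2*L-1) \<le> d*L*(L-1)"
  shows "2*J*(rL+rR+aL+aR) - d*(aL*rL + aR*rR) \<ge> 2*J*(2*L-1) - d*L*(L-1)"
proof -
  have A: "2*J*(aL+rL) - d*aL*rL \<ge> min 0 (2*J*(aL+L) - d*aL*L)" using phi assms by simp
  have B: "2*J*(aR+rR) - d*aR*rR \<ge> min 0 (2*J*(aR+L) - d*aR*L)" using phi assms by simp
  have k: "(aL + aR) * (d*L - 2*J) \<le> (L - 1) * (d*L - 2*J)"
    using assms by (intro mult_right_mono) auto
  have kL: "aL * (d*L - 2*J) \<le> (L - 1) * (d*L - 2*J)"
    using assms by (intro mult_right_mono) auto
  have kR: "aR * (d*L - 2*J) \<le> (L - 1) * (d*L - 2*J)"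
    using assms by (intro mult_right_mono) auto
  have JL: "2*J*L \<ge> 0" using assms by simp
  show ?thesis
    using A B k kL kR JL assms(11) unfolding min_def
    by (simp split: if_splits add: algebra_simps)
qed

lemma LB_col:
  fixes J d :: real
  assumes cf: "\<eta> \<in> configs L" and c: "c \<in> {1..int L}" and z: "\<forall>y\<in>{1..int L}. \<eta> (c,y) = 0"
    and J: "0 \<le> J" and d: "0 \<le> d" and dL: "d * real L \<ge> 2*J" and T: "2*J*(2*real L-1) \<le> d*real L*(real L-1)"
  shows "J * EE L \<eta> - d * card {i\<in>Lam L. \<eta> i \<noteq> 0} \<ge> 2*J*(2*real L-1) - d*real L*(real L-1)"
proof -
  define I where "I = {1..int L}"
  define RL where "RL = I \<inter> {y. \<exists>x\<in>{1..c-1}. \<eta> (x,y) \<noteq> 0}"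
  define RR where "RR = I \<inter> {y. \<exists>x\<in>{c+1..int L}. \<eta> (x,y) \<noteq> 0}"
  define CC where "CC = I \<inter> {x. \<exists>y\<in>{1..int L}. \<eta> (x,y) \<noteq> 0}"
  define CL where "CL = {1..c-1} \<inter> {x. \<exists>y\<in>{1..int L}. \<eta> (x,y) \<noteq> 0}"
  define CR where "CR = {c+1..int L} \<inter> {x. \<exists>y\<in>{1..int L}. \<eta> (x,y) \<noteq> 0}"
  have finI: "finite I" by (simp add: I_def)
  have L0: "L > 0" using c by auto
  have h: "(\<Sum>y\<in>I. hrow L \<eta> y) \<ge> 2 * real (card RL) + 2 * real (card RR)"
  proof -
    have "2 * real (card RL) + 2 * real (card RR) = (\<Sum>y\<in>I. 2 * of_bool (\<exists>x\<in>{1..c-1}. \<eta> (x,y) \<noteq> 0) + 2 * of_bool (\<exists>x\<in>{c+1..int L}. \<eta> (x,y) \<noteq> 0))"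
      by (simp add: sum.distrib flip: sum_distrib_left add: finI RL_def RR_def)
    also have "\<dots> \<le> (\<Sum>y\<in>I. hrow L \<eta> y)"
      by (intro sum_mono row_lb[OF cf c z]) (simp add: I_def)
    finally show ?thesis .
  qed
  have v: "(\<Sum>x\<in>I. vcol L \<eta> x) \<ge> 2 * real (card CC)"
  proof -
    have "2 * real (card CC) = (\<Sum>x\<in>I. 2 * of_bool (\<exists>y\<in>{1..int L}. \<eta> (x,y) \<noteq> 0))"
      by (simp flip: sum_distrib_left add: finI CC_def)
    also have "\<dots> \<le> (\<Sum>x\<in>I. vcol L \<eta> x)"
      by (intro sum_mono col_lb[OF cf]) (simp add: I_def)
    finally show ?thesis .
  qed
  have cc: "card CL + card CR \<le> card CC"
  proof -
    have "card CL + card CR = card (CL \<union> CR)"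
      by (rule card_Un_disjoint[symmetric]) (auto simp: CL_def CR_def)
    also have "\<dots> \<le> card CC" using c by (intro card_mono) (auto simp: CC_def CL_def CR_def I_def finI)
    finally show ?thesis .
  qed
  have nz: "card {i\<in>Lam L. \<eta> i \<noteq> 0} \<le> card CL * card RL + card CR * card RR"
  proof -
    have sub: "{i\<in>Lam L. \<eta> i \<noteq> 0} \<subseteq> CL \<times> RL \<union> CR \<times> RR"
    proof
      fix i assume i: "i \<in> {i\<in>Lam L. \<eta> i \<noteq> 0}"
      obtain x y where xy: "i = (x,y)" by (cases i)
      have xy': "x \<in> {1..int L}" "y \<in> {1..int L}" "\<eta> (x,y) \<noteq> 0" using i xy by (auto simp: Lam_def)
      hence "x \<noteq> c" using z by auto
      thus "i \<in> CL \<times> RL \<union> CR \<times> RR" using xy xy'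
        by (cases "x < c") (auto simp: CL_def RL_def CR_def RR_def I_def)
    qed
    have "card {i\<in>Lam L. \<eta> i \<noteq> 0} \<le> card (CL \<times> RL \<union> CR \<times> RR)"
      by (rule card_mono[OF _ sub]) (simp add: CL_def RL_def CR_def RR_def I_def)
    also have "\<dots> \<le> card (CL \<times> RL) + card (CR \<times> RR)" by (rule card_Un_le)
    finally show ?thesis by (simp add: card_cartesian_product)
  qed
  have bCL: "card CL \<le> nat (c - 1)"
    using card_mono[of "{1..c-1}" CL] by (auto simp: CL_def)
  have bCR: "card CR \<le> nat (int L - c)"
    using card_mono[of "{c+1..int L}" CR] by (auto simp: CR_def)
  have bRL: "card RL \<le> L" using card_mono[of I RL] by (auto simp: RL_def I_def)
  have bRR: "card RR \<le> L" using card_mono[of I RR] by (auto simp: RR_def I_def)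
  have sumC: "real (card CL) + real (card CR) \<le> real L - 1"
  proof -
    have "card CL + card CR \<le> nat (c - 1) + nat (int L - c)" using bCL bCR by simp
    also have "\<dots> = L - 1" using c by auto
    finally show ?thesis using L0 by linarith
  qed
  have cc': "real (card CL) + real (card CR) \<le> real (card CC)" using cc by linarith
  have EEge: "EE L \<eta> \<ge> 2 * (real (card RL) + real (card RR) + real (card CL) + real (card CR))"
    using h v cc' unfolding EE_def I_def[symmetric] by (smt (verit))
  have main: "2*J*(real (card RL) + real (card RR) + real (card CL) + real (card CR)) - d*(real (card CL)*real (card RL) + real (card CR)*real (card RR)) \<ge> 2*J*(2*real L-1) - d*real L*(real L-1)"
    apply (rule arith_lb)
    using J bRL bRR sumC L0 dL T by auto
  have "J * EE L \<eta> \<ge> J * (2 * (real (card RL) + real (card RR) + real (card CL) + real (card CR)))"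
    using EEge J by (rule mult_left_mono)
  moreover have "d * card {i\<in>Lam L. \<eta> i \<noteq> 0} \<le> d * (real (card CL)*real (card RL) + real (card CR)*real (card RR))"
  proof -
    have "real (card {i\<in>Lam L. \<eta> i \<noteq> 0}) \<le> real (card CL*card RL + card CR*card RR)" using nz by linarith
    thus ?thesis using d by (intro mult_left_mono) auto
  qed
  ultimately show ?thesis using main by (simp add: ring_distribs)
qed


definition tr :: "config \<Rightarrow> config" where "tr \<eta> = (\<lambda>i. \<eta> (snd i, fst i))"

lemma tr_configs: "\<eta> \<in> configs L \<Longrightarrow> tr \<eta> \<in> configs L"
  by (auto simp: configs_def tr_def Lam_def)

lemma EE_tr: "EE L (tr \<eta>) = EE L \<eta>"
  by (simp add: EE_def hrow_def vcol_def tr_def)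

lemma Nz_tr: "card {i\<in>Lam L. tr \<eta> i \<noteq> 0} = card {i\<in>Lam L. \<eta> i \<noteq> 0}"
proof -
  have "{i\<in>Lam L. tr \<eta> i \<noteq> 0} = prod.swap ` {i\<in>Lam L. \<eta> i \<noteq> 0}"
    by (auto simp: tr_def Lam_def image_iff)
  thus ?thesis by (simp add: card_image)
qed

lemma LB:
  fixes J d :: real
  assumes cf: "\<eta> \<in> configs L" and zr: "has_zero_column_or_row L \<eta>"
    and J: "0 \<le> J" and d: "0 \<le> d" and dL: "d * real L \<ge> 2*J" and T: "2*J*(2*real L-1) \<le> d*real L*(real L-1)"
  shows "J * EE L \<eta> - d * card {i\<in>Lam L. \<eta> i \<noteq> 0} \<ge> 2*J*(2*real L-1) - d*real L*(real L-1)"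
proof -
  consider (col) c where "c \<in> {1..int L}" "\<forall>y\<in>{1..int L}. \<eta> (c,y) = 0"
    | (row) r where "r \<in> {1..int L}" "\<forall>x\<in>{1..int L}. \<eta> (x,r) = 0"
    using zr unfolding has_zero_column_or_row_def by blast
  then show ?thesis
  proof cases
    case col
    then show ?thesis using LB_col[OF cf col J d dL T] by simp
  next
    case row
    have "\<forall>y\<in>{1..int L}. tr \<eta> (r,y) = 0" using row by (simp add: tr_def)
    from LB_col[OF tr_configs[OF cf] row(1) this J d dL T] show ?thesis
      by (simp add: EE_tr Nz_tr)
  qed
qed

definition xi :: "nat \<Rightarrow> nat \<Rightarrow> config" where
  "xi L n = (\<lambda>i. if i \<in> Lam L then (if snd i = 1 \<and> fst i \<le> int n then 1 else -1) else 0)"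

lemma xi_configs: "xi L n \<in> configs L"
  by (auto simp: configs_def xi_def)

lemma xi_plus: assumes "n \<le> L" shows "card {i\<in>Lam L. xi L n i = 1} = n"
proof -
  have "{i\<in>Lam L. xi L n i = 1} = {1..int n} \<times> {1}" using assms by (auto simp: xi_def Lam_def)
  thus ?thesis by (simp add: card_cartesian_product)
qed

lemma xi_nz: "card {i\<in>Lam L. xi L n i \<noteq> 0} = L * L"
proof -
  have "{i\<in>Lam L. xi L n i \<noteq> 0} = Lam L" by (auto simp: xi_def)
  thus ?thesis by (simp add: Lam_def card_cartesian_product)
qed

lemma xi_hrow:
  assumes "1 \<le> n" "n < L" "y \<in> {1..int L}"
  shows "hrow L (xi L n) y = 2 + (if y = 1 then 4 else 0)"
proof -
  have "hrow L (xi L n) y = (\<Sum>x\<in>{0..int L}. (if x = 0 then 1 else 0) + (if x = int L then 1 else 0)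
        + (if x = int n then (if y = 1 then 4 else 0) else 0))"
    unfolding hrow_def using assms by (intro sum.cong refl) (auto simp: xi_def Lam_def)
  also have "\<dots> = 2 + (if y = 1 then 4 else 0)" using assms by (simp add: sum.distrib)
  finally show ?thesis .
qed

lemma xi_vcol:
  assumes "1 \<le> n" "n < L" "x \<in> {1..int L}"
  shows "vcol L (xi L n) x = 2 + (if x \<le> int n then 4 else 0)"
proof -
  have "vcol L (xi L n) x = (\<Sum>y\<in>{0..int L}. (if y = 0 then 1 else 0) + (if y = int L then 1 else 0)
        + (if y = 1 then (if x \<le> int n then 4 else 0) else 0))"
    unfolding vcol_def using assms by (intro sum.cong refl) (auto simp: xi_def Lam_def)
  also have "\<dots> = 2 + (if x \<le> int n then 4 else 0)" using assms by (simp add: sum.distrib)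
  finally show ?thesis .
qed

lemma xi_EE:
  assumes "1 \<le> n" "n < L"
  shows "EE L (xi L n) = 4 * real L + 4 * real n + 4"
proof -
  have a: "(\<Sum>y\<in>{1..int L}. hrow L (xi L n) y) = (\<Sum>y\<in>{1..int L}. 2 + (if y = 1 then 4 else 0))"
    using assms by (intro sum.cong refl xi_hrow) auto
  have b: "(\<Sum>x\<in>{1..int L}. vcol L (xi L n) x) = (\<Sum>x\<in>{1..int L}. 2 + (if x \<le> int n then 4 else 0))"
    using assms by (intro sum.cong refl xi_vcol) auto
  have a2: "(\<Sum>y\<in>{1..int L}. 2 + (if y = 1 then 4 else 0)) = 2 * real L + 4"
    using assms by (simp add: sum.distrib)
  have st: "{x. 1 \<le> x \<and> x \<le> int L \<and> x \<le> int n} = {1..int n}" using assms by auto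
  have b2: "(\<Sum>x\<in>{1..int L}. 2 + (if x \<le> int n then 4 else (0::real))) = 2 * real L + 4 * real n"
    by (simp add: sum.distrib sum.inter_filter[symmetric] Collect_conj_eq[symmetric] st)
  show ?thesis unfolding EE_def a b a2 b2 by simp
qed


lemma key_arith:
  fixes J d h lam x n L :: real
  assumes d: "0 < d" "d < h" and J: "J \<ge> 5 * d" "J \<ge> h"
    and x: "x = (2*J + d) / (2*h)" and n: "n \<le> (x+1) * x" and L: "L > (2*J/d)^3"
  shows "4*J*n + 6*J < d*L"
proof -
  define u where "u = J / d"
  have u5: "u \<ge> 5" using J d by (simp add: u_def field_simps)
  have hpos: "h > 0" using d by simp
  have x1: "x \<le> J/h + 1/2" using d hpos unfolding x by (simp add: field_simps)
  have Jh: "J/h \<le> u" unfolding u_def using d J by (intro divide_left_mono) auto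
  have x2: "x \<le> u + 1/2" using x1 Jh by linarith
  have x0: "x \<ge> 0" using x d J hpos by simp
  have "n \<le> (u + 3/2) * (u + 1/2)"
  proof -
    have "(x+1) * x \<le> (u + 3/2) * (u + 1/2)" using x0 x2 by (intro mult_mono) auto
    thus ?thesis using n by linarith
  qed
  also have "\<dots> \<le> (u+3/2)^2" unfolding power2_eq_square using u5 by (intro mult_left_mono) auto
  finally have nu: "n \<le> (u+3/2)^2" .
  have Jpos: "J > 0" using J d by linarith
  have "4*J*n + 6*J \<le> J * (4*(u+3/2)^2 + 6)"
    using nu Jpos by (simp add: algebra_simps)
  also have "\<dots> < J * (8 * u^2)"
  proof -
    have "4*(u+3/2)^2 + 6 < 8 * u^2"
    proof -
      have "u * u \<ge> 5 * u" using u5 by (simp add: mult_right_mono)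
      moreover have "4*(u+3/2)^2 + 6 = 4*(u*u) + 12*u + 15" by (simp add: power2_eq_square algebra_simps)
      moreover have "8 * u^2 = 8*(u*u)" by (simp add: power2_eq_square)
      ultimately show ?thesis using u5 by linarith
    qed
    thus ?thesis using Jpos by simp
  qed
  also have "J * (8 * u^2) = d * (2*J/d)^3"
    using d by (simp add: u_def field_simps power3_eq_cube power2_eq_square)
  also have "\<dots> < d * L" using L d by simp
  finally show ?thesis .
qed


theorem lemma4p9:
  fixes lam h :: real
  assumes "0 < h" and "lam / 2 < h" and "h < lam"
  shows "\<exists>J0. \<forall>(J::real) (L::nat) \<eta>.
           J \<ge> J0 \<longrightarrow> cond_C_rest J lam h L \<longrightarrow>
           \<eta> \<in> M L (n_c_plus J lam h) \<longrightarrow> has_zero_column_or_row L \<eta> \<longrightarrow>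
           \<not> is_minimizer_on J lam h L (M L (n_c_plus J lam h)) \<eta>"
proof (intro exI allI impI)
  define d where "d = lam - h"
  have d0: "0 < d" "d < h" using assms by (auto simp: d_def)
  fix J :: real and L :: nat and \<eta>
  assume J0: "max (5 * (lam - h)) h \<le> J" and cC: "cond_C_rest J lam h L"
    and eM: "\<eta> \<in> M L (n_c_plus J lam h)" and zr: "has_zero_column_or_row L \<eta>"
  define n where "n = n_c_plus J lam h"
  have J5: "J \<ge> 5 * d" "J \<ge> h" using J0 by (auto simp: d_def)
  have Jpos: "J > 0" using J5 d0 by linarith
  have Lb: "real L > (2*J/d)^3" using cC by (simp add: cond_C_rest_def d_def)
  define x where "x = (2*J + d) / (2*h)"
  define l where "l = l_c J lam h"
  have lx: "l = \<lfloor>x\<rfloor> + 1" by (simp add: l_def l_c_def x_def d_def algebra_simps)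
  have x1: "x \<ge> 1" using J5 d0 unfolding x_def by (simp add: field_simps)
  have l_up: "real_of_int l \<le> x + 1" and l_lo: "real_of_int l > x" using lx by linarith+
  have l2: "l \<ge> 2" using lx x1 by linarith
  have nreal: "real n = real_of_int l * (real_of_int l - 1)"
  proof -
    have "l * (l - 1) \<ge> 0" using l2 by simp
    hence "int n = l * (l - 1)" by (simp add: n_def n_c_plus_def l_def)
    hence "real_of_int (int n) = real_of_int (l * (l - 1))" by simp
    thus ?thesis by simp
  qed
  have n1: "real n \<ge> 1"
  proof -
    have "real_of_int l \<ge> 2" using l2 by simp
    hence "real_of_int l * (real_of_int l - 1) \<ge> 2 * 1" by (intro mult_mono) auto
    thus ?thesis using nreal by simp
  qed
  have nx: "real n \<le> (x+1) * x"
    unfolding nreal using l_up l_lo l2 x1 by (intro mult_mono) auto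
  have key: "4*J*real n + 6*J < d*real L"
    by (rule key_arith[OF d0 J5 x_def nx Lb])
  have nL: "n < L"
  proof -
    have "4*J*real n < d * real L" using key Jpos by linarith
    also have "\<dots> \<le> 4*J*real L" using J5 d0 by (intro mult_right_mono) auto
    finally have "real n < real L" using Jpos by simp
    thus ?thesis by simp
  qed
  have n1': "1 \<le> n" using n1 by simp
  have dL: "d * real L \<ge> 2*J" using key Jpos n1 by (smt (verit) mult_nonneg_nonneg of_nat_0_le_iff)
  have T: "2*J*(2*real L-1) \<le> d*real L*(real L-1)"
  proof -
    have "d * real L \<ge> 6*J" using key Jpos n1 by (smt (verit) mult_nonneg_nonneg of_nat_0_le_iff)
    hence a: "d * (real L - 1) \<ge> 4*J" using J5 d0 by (simp add: algebra_simps)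
    have "d*real L*(real L-1) = real L * (d * (real L - 1))" by simp
    also have "\<dots> \<ge> real L * (4*J)" using a by (intro mult_left_mono) auto
    finally show ?thesis using Jpos by (simp add: algebra_simps)
  qed
  have cf: "\<eta> \<in> configs L" and np: "card {i\<in>Lam L. \<eta> i = 1} = n" using eM by (auto simp: M_def n_def)
  have Heta: "H J lam h L \<eta> \<ge> 2*J*(2*real L-1) - d*real L*(real L-1) - 2*h*real n"
  proof -
    have "H J lam h L \<eta> = J * EE L \<eta> - (d * card {i\<in>Lam L. \<eta> i \<noteq> 0} + 2*h*card {i\<in>Lam L. \<eta> i = 1})"
      using H_eq[OF cf, of J lam h] bulk[OF cf, of lam h] unfolding d_def by linarith
    thus ?thesis using LB[OF cf zr Jpos[THEN less_imp_le] d0(1)[THEN less_imp_le] dL T] np by simp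
  qed
  have Hxi: "H J lam h L (xi L n) = J * (4 * real L + 4 * real n + 4) - (d * (real L * real L) + 2*h*real n)"
    using H_eq[OF xi_configs, of J lam h L n] bulk[OF xi_configs, of lam L n h] xi_EE[OF n1' nL]
      xi_nz[of L n] xi_plus[of n L] nL unfolding d_def by simp
  have lt: "H J lam h L (xi L n) < H J lam h L \<eta>"
  proof -
    have "J * (4 * real L + 4 * real n + 4) - (d * (real L * real L) + 2*h*real n)
        < 2*J*(2*real L-1) - d*real L*(real L-1) - 2*h*real n"
      using key by (simp add: algebra_simps)
    thus ?thesis using Hxi Heta by linarith
  qed
  have xiM: "xi L n \<in> M L n" using xi_configs xi_plus[of n L] nL by (simp add: M_def)
  show "\<not> is_minimizer_on J lam h L (M L (n_c_plus J lam h)) \<eta>"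
    using lt xiM unfolding is_minimizer_on_def n_def[symmetric] by force
qed

end
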